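(* In the multi-product pricing model of the context with a positive vector $f\in\mathbb{R}^n$, suppose that (P1) for every $j\in M$ and every $i\in N$, $d_{ij}(p)$ is (weakly) increasing in $p_k$ for every $k\ne i$; and (P2) for every $j\in M$, $\sum_{i\in N}f_id_{ij}(p)$ is (weakly) decreasing in $p_i$ for every $i\in N$. Then Assumption A1 holds, i.e. $G(q)\le H(q)$ for all $q\ge0$.
   Context: Products $N=\{1,\dots,n\}$, customer types $M=\{1,\dots,m\}$, non-negative demand functions $d_{ij}:\mathbb{R}^n_{\ge0}\to\mathbb{R}_{\ge0}$ (demand for product $i$ by type $j$ at price vector $p$); $R_j(p)=\sum_ip_id_{ij}(p)$; weights $\theta_j>0$ with $\sum_j\theta_j=1$. For each $j$, $\bar p^j=(\bar p_{1j},\dots,\bar p_{nj})$ is a maximizer of $R_j$ over $p\ge0$ with positive finite components. For $q\ge 0$, $\delta_{ij}(q):=1$ if $q\le\bar p_{ij}/f_i$ and $0$ otherwise, $G(q):=\sum_j\theta_j\sum_if_id_{ij}(\bar p^j)\delta_{ij}(q)$, and $H(q):=\sum_j\theta_j\sum_if_id_{ij}(qf)$. Assumption A1 is the statement $G(q)\le H(q)$ for all $q\ge0$. *)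

theory Defs
  imports Complex_Main
begin

text \<open>Products are indexed by a finite type 'n (the set N), customer types by a finite
type 'm (the set M). Price vectors are functions 'n \<Rightarrow> real.
d i j p is the demand for product i by type j at price vector p.
pbar j i is the component i of the revenue-maximising price vector of type j.\<close>

definition nonneg_vec :: "('n \<Rightarrow> real) \<Rightarrow> bool" where
  "nonneg_vec p \<longleftrightarrow> (\<forall>i. 0 \<le> p i)"

definition revenue :: "('n \<Rightarrow> 'm \<Rightarrow> ('n \<Rightarrow> real) \<Rightarrow> real) \<Rightarrow> 'm \<Rightarrow> ('n::finite \<Rightarrow> real) \<Rightarrow> real" where
  "revenue d j p = (\<Sum>i\<in>UNIV. p i * d i j p)"

definition delta :: "('m \<Rightarrow> 'n \<Rightarrow> real) \<Rightarrow> ('n \<Rightarrow> real) \<Rightarrow> 'n \<Rightarrow> 'm \<Rightarrow> real \<Rightarrow> real" where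
  "delta pbar f i j q = (if q \<le> pbar j i / f i then 1 else 0)"

definition Gfun :: "('n::finite \<Rightarrow> 'm::finite \<Rightarrow> ('n \<Rightarrow> real) \<Rightarrow> real) \<Rightarrow> ('m \<Rightarrow> real)
    \<Rightarrow> ('m \<Rightarrow> 'n \<Rightarrow> real) \<Rightarrow> ('n \<Rightarrow> real) \<Rightarrow> real \<Rightarrow> real" where
  "Gfun d theta pbar f q =
     (\<Sum>j\<in>UNIV. theta j * (\<Sum>i\<in>UNIV. f i * d i j (pbar j) * delta pbar f i j q))"

definition Hfun :: "('n::finite \<Rightarrow> 'm::finite \<Rightarrow> ('n \<Rightarrow> real) \<Rightarrow> real) \<Rightarrow> ('m \<Rightarrow> real)
    \<Rightarrow> ('n \<Rightarrow> real) \<Rightarrow> real \<Rightarrow> real" where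
  "Hfun d theta f q =
     (\<Sum>j\<in>UNIV. theta j * (\<Sum>i\<in>UNIV. f i * d i j (\<lambda>k. q * f k)))"

end

theory Submission
  imports Defs
begin

lemma step1:
  fixes d :: "'n::finite \<Rightarrow> 'm::finite \<Rightarrow> ('n \<Rightarrow> real) \<Rightarrow> real"
  assumes P1: "\<And>j i k p t. k \<noteq> i \<Longrightarrow> nonneg_vec p \<Longrightarrow> p k \<le> t \<Longrightarrow>
               d i j p \<le> d i j (p(k := t))"
  shows "finite A \<Longrightarrow> nonneg_vec p \<Longrightarrow> (\<forall>k\<in>A. p k \<le> g k) \<Longrightarrow> i \<notin> A \<Longrightarrow>
     d i j p \<le> d i j (\<lambda>k. if k \<in> A then g k else p k)"
proof (induction A rule: finite_induct)
  case empty
  then show ?case by simp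
next
  case (insert a A)
  let ?q = "\<lambda>k. if k \<in> A then g k else p k"
  have nn: "nonneg_vec ?q" using insert.prems unfolding nonneg_vec_def
    by (smt (verit) insertCI)
  have "d i j p \<le> d i j ?q" using insert by auto
  also have "\<dots> \<le> d i j (?q(a := g a))"
    apply (rule P1) using insert nn by auto
  also have "?q(a := g a) = (\<lambda>k. if k \<in> insert a A then g k else p k)" by auto
  finally show ?case .
qed

lemma step2:
  fixes d :: "'n::finite \<Rightarrow> 'm::finite \<Rightarrow> ('n \<Rightarrow> real) \<Rightarrow> real"
  assumes P2: "\<And>j i p t. nonneg_vec p \<Longrightarrow> p i \<le> t \<Longrightarrow>
               (\<Sum>l\<in>UNIV. f l * d l j (p(i := t))) \<le> (\<Sum>l\<in>UNIV. f l * d l j p)"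
  shows "finite A \<Longrightarrow> nonneg_vec p \<Longrightarrow> nonneg_vec g \<Longrightarrow> (\<forall>k\<in>A. g k \<le> p k) \<Longrightarrow>
     (\<Sum>l\<in>UNIV. f l * d l j p) \<le> (\<Sum>l\<in>UNIV. f l * d l j (\<lambda>k. if k \<in> A then g k else p k))"
proof (induction A rule: finite_induct)
  case empty
  then show ?case by simp
next
  case (insert a A)
  let ?q = "\<lambda>k. if k \<in> A then g k else p k"
  have "(\<Sum>l\<in>UNIV. f l * d l j p) \<le> (\<Sum>l\<in>UNIV. f l * d l j ?q)" using insert by auto
  also have "?q = (?q(a := g a))(a := p a)" using insert by auto
  also have "(\<Sum>l\<in>UNIV. f l * d l j ((?q(a := g a))(a := p a))) \<le> (\<Sum>l\<in>UNIV. f l * d l j (?q(a := g a)))"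
    apply (rule P2) using insert unfolding nonneg_vec_def by auto
  also have "?q(a := g a) = (\<lambda>k. if k \<in> insert a A then g k else p k)" by auto
  finally show ?case .
qed

theorem proposition1:
  fixes d :: "'n::finite \<Rightarrow> 'm::finite \<Rightarrow> ('n \<Rightarrow> real) \<Rightarrow> real"
    and theta :: "'m \<Rightarrow> real"
    and pbar :: "'m \<Rightarrow> 'n \<Rightarrow> real"
    and f :: "'n \<Rightarrow> real"
  assumes d_nonneg: "\<And>i j p. nonneg_vec p \<Longrightarrow> 0 \<le> d i j p"
    and theta_pos: "\<And>j. 0 < theta j"
    and theta_sum: "(\<Sum>j\<in>UNIV. theta j) = 1"
    and pbar_pos: "\<And>i j. 0 < pbar j i"
    and pbar_max: "\<And>j p. nonneg_vec p \<Longrightarrow> revenue d j p \<le> revenue d j (pbar j)"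
    and f_pos: "\<And>i. 0 < f i"
    and P1: "\<And>j i k p t. k \<noteq> i \<Longrightarrow> nonneg_vec p \<Longrightarrow> p k \<le> t \<Longrightarrow>
               d i j p \<le> d i j (p(k := t))"
    and P2: "\<And>j i p t. nonneg_vec p \<Longrightarrow> p i \<le> t \<Longrightarrow>
               (\<Sum>l\<in>UNIV. f l * d l j (p(i := t))) \<le> (\<Sum>l\<in>UNIV. f l * d l j p)"
  shows "\<forall>q\<ge>0. Gfun d theta pbar f q \<le> Hfun d theta f q"
proof (intro allI impI)
  fix q :: real assume q: "0 \<le> q"
  have per: "(\<Sum>i\<in>UNIV. f i * d i j (pbar j) * delta pbar f i j q)
      \<le> (\<Sum>i\<in>UNIV. f i * d i j (\<lambda>k. q * f k))" for j
  proof -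
    define S where "S = {i. q \<le> pbar j i / f i}"
    have S_iff: "i \<in> S \<longleftrightarrow> q * f i \<le> pbar j i" for i
      using f_pos[of i] by (simp add: S_def pos_le_divide_eq)
    define p1 where "p1 = (\<lambda>k. if k \<in> - S then q * f k else pbar j k)"
    have nnp: "nonneg_vec (pbar j)" unfolding nonneg_vec_def using pbar_pos less_imp_le by blast
    have nnqf: "nonneg_vec (\<lambda>k. q * f k)" unfolding nonneg_vec_def using q f_pos
      by (simp add: less_imp_le)
    have nn1: "nonneg_vec p1" using nnp nnqf unfolding p1_def nonneg_vec_def by auto
    have A: "d i j (pbar j) \<le> d i j p1" if "i \<in> S" for i
      unfolding p1_def
      apply (rule step1[where d=d, OF P1])
      using that S_iff nnp by auto
    have "(\<Sum>i\<in>UNIV. f i * d i j (pbar j) * delta pbar f i j q)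
        = (\<Sum>i\<in>S. f i * d i j (pbar j))"
      by (simp add: delta_def S_def if_distrib sum.If_cases cong: if_cong)
    also have "\<dots> \<le> (\<Sum>i\<in>S. f i * d i j p1)"
      apply (rule sum_mono) using A f_pos by (simp add: mult_left_mono less_imp_le)
    also have "\<dots> \<le> (\<Sum>i\<in>UNIV. f i * d i j p1)"
      apply (rule sum_mono2) using d_nonneg[OF nn1] f_pos by (auto simp: less_imp_le)
    also have "\<dots> \<le> (\<Sum>i\<in>UNIV. f i * d i j (\<lambda>k. if k \<in> S then q * f k else p1 k))"
      apply (rule step2[where f=f and d=d, OF P2])
      using nn1 nnqf S_iff by (auto simp: p1_def)
    also have "(\<lambda>k. if k \<in> S then q * f k else p1 k) = (\<lambda>k. q * f k)"
      by (auto simp: p1_def)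
    finally show ?thesis .
  qed
  show "Gfun d theta pbar f q \<le> Hfun d theta f q"
    unfolding Gfun_def Hfun_def
    apply (rule sum_mono)
    using per theta_pos by (simp add: mult_left_mono less_imp_le)
qed

end
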